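(* Let $\Sigma$ be a real symmetric positive definite $n\times n$ matrix, let \[\mathcal S(\Sigma)=\{(\hat\Sigma,\tilde\Sigma)\mid \Sigma=\hat\Sigma+\tilde\Sigma,\ \hat\Sigma\ge0,\ \tilde\Sigma\ge 0,\ \tilde\Sigma\text{ diagonal}\},\] let $(\hat\Sigma_{\rm opt},\tilde\Sigma_{\rm opt})$ be the (unique) maximizer over $\mathcal S(\Sigma)$ of $\operatorname{trace}(\hat\Sigma-\hat\Sigma\Sigma^{-1}\hat\Sigma)$, and let $R_{\rm opt}=\hat\Sigma_{\rm opt}-\hat\Sigma_{\rm opt}\Sigma^{-1}\hat\Sigma_{\rm opt}$. Then for every $(\hat\Sigma,\tilde\Sigma)\in\mathcal S(\Sigma)$, \[\operatorname{trace}\big((\hat\Sigma-\hat\Sigma_{\rm opt})\Sigma^{-1}(\hat\Sigma-\hat\Sigma_{\rm opt})'\big)\le\operatorname{trace}(R_{\rm opt}).\]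
   Context: All matrices are real symmetric $n\times n$; $M\ge0$ means positive semidefinite. The maximizer $\hat\Sigma_{\rm opt}$ is also the maximizer of $\min_K L(K,\hat\Sigma,\tilde\Sigma)$ with $L(K,\hat\Sigma,\tilde\Sigma)=\operatorname{trace}(\hat\Sigma-K\hat\Sigma-\hat\Sigma K'+K(\hat\Sigma+\tilde\Sigma)K')$. *)

theory Defs
  imports "HOL-Analysis.Analysis"
begin

definition symmetric_mat :: "real^'n^'n \<Rightarrow> bool" where
  "symmetric_mat A \<longleftrightarrow> transpose A = A"

definition psd :: "real^'n^'n \<Rightarrow> bool" where
  "psd A \<longleftrightarrow> symmetric_mat A \<and> (\<forall>x. 0 \<le> x \<bullet> (A *v x))"

definition pd :: "real^'n^'n \<Rightarrow> bool" where
  "pd A \<longleftrightarrow> symmetric_mat A \<and> (\<forall>x. x \<noteq> 0 \<longrightarrow> 0 < x \<bullet> (A *v x))"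

definition diagonal_mat :: "real^'n^'n \<Rightarrow> bool" where
  "diagonal_mat A \<longleftrightarrow> (\<forall>i j. i \<noteq> j \<longrightarrow> A $ i $ j = 0)"

definition decomps :: "real^'n^'n \<Rightarrow> ((real^'n^'n) \<times> (real^'n^'n)) set" where
  "decomps S = {(Sh, St). S = Sh + St \<and> psd Sh \<and> psd St \<and> diagonal_mat St}"

definition objective :: "real^'n^'n \<Rightarrow> real^'n^'n \<Rightarrow> real" where
  "objective S Sh = trace (Sh - Sh ** matrix_inv S ** Sh)"

end

theory Submission
  imports Defs
begin
lemma madd_r: "((A::real^'n^'m) + B) ** (C::real^'p^'n) = A ** C + B ** C"
  by (vector matrix_matrix_mult_def sum.distrib[symmetric] field_simps)
lemma msub_l: "(A::real^'n^'m) ** (B - (C::real^'p^'n)) = A ** B - A ** C"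
  by (vector matrix_matrix_mult_def sum_subtractf[symmetric] field_simps)
lemma msub_r: "((A::real^'n^'m) - B) ** (C::real^'p^'n) = A ** C - B ** C"
  by (vector matrix_matrix_mult_def sum_subtractf[symmetric] field_simps)
lemma tp_add: "transpose ((A::real^'n^'m) + B) = transpose A + transpose B"
  by (simp add: transpose_def vec_eq_iff)
lemma tp_sub: "transpose ((A::real^'n^'m) - B) = transpose A - transpose B"
  by (simp add: transpose_def vec_eq_iff)
lemma trace_tp: "trace (transpose (A::real^'n^'n)) = trace A"
  by (simp add: trace_def transpose_def)
lemma trace_scaleR: "trace (c *\<^sub>R (A::real^'n^'n)) = c * trace A"
  by (simp add: trace_def sum_distrib_left)
lemma tp_mat1: "transpose (mat 1 :: real^'n^'n) = mat 1"
  by (simp add: transpose_def mat_def vec_eq_iff)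
lemma diag_entry: "(transpose M ** B ** M) $ i $ i = column i (M::real^'n^'m) \<bullet> ((B::real^'m^'m) *v column i M)"
  by (simp add: matrix_matrix_mult_def transpose_def column_def inner_vec_def matrix_vector_mult_def
      sum_distrib_left sum_distrib_right mult_ac) (subst sum.swap, simp add: mult_ac)
lemma tr_nonneg: assumes "\<forall>x. 0 \<le> x \<bullet> ((B::real^'m^'m) *v x)"
  shows "0 \<le> trace (transpose (M::real^'n^'m) ** B ** M)"
  unfolding trace_def diag_entry using assms by (simp add: sum_nonneg)
lemma psd_comb: assumes "psd A" "psd B" "0 \<le> t" "t \<le> 1"
  shows "psd (A + t *\<^sub>R (B - A))"
proof -
  have "transpose (A + t *\<^sub>R (B - A)) = A + t *\<^sub>R (B - A)"
    using assms by (simp add: psd_def symmetric_mat_def tp_add tp_sub transpose_scalar)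
  moreover have "0 \<le> x \<bullet> ((A + t *\<^sub>R (B - A)) *v x)" for x
  proof -
    have "(A + t *\<^sub>R (B - A)) *v x = (1-t) *\<^sub>R (A *v x) + t *\<^sub>R (B *v x)"
      by (simp add: vec_eq_iff matrix_vector_mult_def algebra_simps sum.distrib sum_subtractf sum_distrib_left)
    then have "x \<bullet> ((A + t *\<^sub>R (B - A)) *v x) = (1-t) * (x \<bullet> (A *v x)) + t * (x \<bullet> (B *v x))"
      by (simp add: inner_add_right)
    moreover have "0 \<le> x \<bullet> (A *v x)" "0 \<le> x \<bullet> (B *v x)" using assms by (auto simp: psd_def)
    ultimately show ?thesis using assms by simp
  qed
  ultimately show ?thesis by (simp add: psd_def symmetric_mat_def)
qed
lemma obj_nonneg:
  fixes A B P S :: "real^'n^'n"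
  assumes SAB: "S = A + B" and sA: "transpose A = A" and sB: "transpose B = B"
    and pA: "\<forall>x. 0 \<le> x \<bullet> (A *v x)" and pB: "\<forall>x. 0 \<le> x \<bullet> (B *v x)"
    and sP: "transpose P = P" and PS: "P ** S = mat 1"
  shows "0 \<le> trace (A - A ** P ** A)"
proof -
  have BS: "B = S - A" using SAB by simp
  have h1: "A ** P ** B = A - A ** P ** A"
    unfolding BS msub_l by (simp add: matrix_mul_assoc[symmetric] PS)
  have h2: "transpose (A ** P ** B) = B ** P ** A"
    by (simp add: matrix_transpose_mul sA sB sP matrix_mul_assoc)
  have h3: "transpose (A - A ** P ** A) = A - A ** P ** A"
    by (simp add: tp_sub matrix_transpose_mul sA sP matrix_mul_assoc)
  have h4: "B ** P ** A = A ** P ** B" using h1 h2 h3 by simp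
  have h5: "A ** P ** B = (A ** P ** B) ** P ** A + (B ** P ** A) ** P ** B"
    unfolding h4 by (simp add: matrix_mul_assoc[symmetric] matrix_add_ldistrib[symmetric] SAB[symmetric] PS)
  have e1: "(A ** P ** B) ** P ** A = transpose (P ** A) ** B ** (P ** A)"
    by (simp add: matrix_transpose_mul sA sP matrix_mul_assoc)
  have e2: "(B ** P ** A) ** P ** B = transpose (P ** B) ** A ** (P ** B)"
    by (simp add: matrix_transpose_mul sB sP matrix_mul_assoc)
  have "trace (A ** P ** B) = trace (transpose (P ** A) ** B ** (P ** A)) + trace (transpose (P ** B) ** A ** (P ** B))"
    by (subst h5) (simp add: trace_add e1 e2)
  moreover have "0 \<le> trace (transpose (P ** A) ** B ** (P ** A))" using pB by (rule tr_nonneg)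
  moreover have "0 \<le> trace (transpose (P ** B) ** A ** (P ** B))" using pA by (rule tr_nonneg)
  ultimately show ?thesis using h1 by simp
qed

lemma pd_inv:
  fixes S :: "real^'n^'n"
  assumes "pd S"
  shows "S ** matrix_inv S = mat 1 \<and> matrix_inv S ** S = mat 1 \<and> transpose (matrix_inv S) = matrix_inv S"
proof -
  have "\<forall>x. S *v x = 0 \<longrightarrow> x = 0"
    using assms unfolding pd_def by (metis inner_zero_right less_irrefl)
  then obtain B where "B ** S = mat 1" using matrix_left_invertible_ker by blast
  then have "invertible S" using invertible_left_inverse by blast
  then have inv: "S ** matrix_inv S = mat 1 \<and> matrix_inv S ** S = mat 1"
    unfolding invertible_def matrix_inv_def by (rule someI_ex)
  have sS: "transpose S = S" using assms by (simp add: pd_def symmetric_mat_def)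
  have "S ** transpose (matrix_inv S) = mat 1"
    using arg_cong[OF conjunct2[OF inv], of transpose] by (simp add: matrix_transpose_mul sS tp_mat1)
  then have "matrix_inv S ** S ** transpose (matrix_inv S) = matrix_inv S"
    by (simp add: matrix_mul_assoc[symmetric])
  then have "transpose (matrix_inv S) = matrix_inv S" using inv by simp
  with inv show ?thesis by simp
qed
lemma expand_sq:
  fixes Q D P :: "real^'n^'n"
  shows "(Q + t *\<^sub>R D) ** P ** (Q + t *\<^sub>R D) = Q ** P ** Q + t *\<^sub>R (Q ** P ** D) + t *\<^sub>R (D ** P ** Q) + (t*t) *\<^sub>R (D ** P ** D)"
  by (simp add: matrix_add_ldistrib madd_r scalar_matrix_assoc[symmetric] matrix_scalar_ac algebra_simps)

lemma expand_sq2: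
  fixes A Q P :: "real^'n^'n"
  shows "(A - Q) ** P ** (A - Q) = A ** P ** A - A ** P ** Q - Q ** P ** A + Q ** P ** Q"
  by (simp add: msub_l msub_r algebra_simps)

lemma tr_swap:
  fixes A Q P :: "real^'n^'n"
  assumes "transpose A = A" "transpose Q = Q" "transpose P = P"
  shows "trace (A ** P ** Q) = trace (Q ** P ** A)"
proof -
  have "transpose (A ** P ** Q) = Q ** P ** A" using assms by (simp add: matrix_transpose_mul matrix_mul_assoc)
  then show ?thesis by (metis trace_tp)
qed

theorem proposition13:
  fixes S Sh_opt St_opt :: "real^'n^'n"
  assumes "pd S"
    and "(Sh_opt, St_opt) \<in> decomps S"
    and "\<forall>(Sh, St) \<in> decomps S. objective S Sh \<le> objective S Sh_opt"
  shows "\<forall>(Sh, St) \<in> decomps S.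
           trace ((Sh - Sh_opt) ** matrix_inv S ** transpose (Sh - Sh_opt))
             \<le> trace (Sh_opt - Sh_opt ** matrix_inv S ** Sh_opt)"
proof (intro ballI, clarify)
  fix Sh St assume dec: "(Sh, St) \<in> decomps S"
  define P where "P = matrix_inv S"
  define Q where "Q = Sh_opt"
  have inv: "S ** P = mat 1" "P ** S = mat 1" "transpose P = P"
    using pd_inv[OF assms(1)] unfolding P_def by auto
  have d: "S = Sh + St" "psd Sh" "psd St" "diagonal_mat St" using dec by (auto simp: decomps_def)
  have dO: "S = Q + St_opt" "psd Q" "psd St_opt" "diagonal_mat St_opt" using assms(2) by (auto simp: decomps_def Q_def)
  have sSh: "transpose Sh = Sh" using d by (simp add: psd_def symmetric_mat_def)
  have sSt: "transpose St = St" using d by (simp add: psd_def symmetric_mat_def)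
  have sO: "transpose Q = Q" using dO by (simp add: psd_def symmetric_mat_def)
  have sStO: "transpose St_opt = St_opt" using dO by (simp add: psd_def symmetric_mat_def)
  define D where "D = Sh - Q"
  have sD: "transpose D = D" unfolding D_def by (simp add: tp_sub sSh sO)
  define g where "g = trace D - 2 * trace (D ** P ** Q)"
  define c where "c = trace (D ** P ** D)"
  have gt: "g \<le> t * c" if t: "0 < t" "t \<le> 1" for t
  proof -
    have feas: "(Q + t *\<^sub>R (Sh - Q), St_opt + t *\<^sub>R (St - St_opt)) \<in> decomps S"
      unfolding decomps_def
    proof (clarify, intro conjI)
      show "S = Q + t *\<^sub>R (Sh - Q) + (St_opt + t *\<^sub>R (St - St_opt))"
      proof -
        have e: "Q + t *\<^sub>R (Sh - Q) + (St_opt + t *\<^sub>R (St - St_opt)) = (Q + St_opt) + t *\<^sub>R ((Sh + St) - (Q + St_opt))"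
          by (simp add: algebra_simps)
        show ?thesis unfolding e using d(1) dO(1) by simp
      qed
      show "psd (Q + t *\<^sub>R (Sh - Q))" using psd_comb[OF dO(2) d(2)] t by simp
      show "psd (St_opt + t *\<^sub>R (St - St_opt))" using psd_comb[OF dO(3) d(3)] t by simp
      show "diagonal_mat (St_opt + t *\<^sub>R (St - St_opt))"
        using d(4) dO(4) by (simp add: diagonal_mat_def)
    qed
    have "objective S (Q + t *\<^sub>R D) \<le> objective S Q"
    proof -
      have "objective S (Q + t *\<^sub>R (Sh - Q)) \<le> objective S Sh_opt"
        using assms(3) feas by blast
      then show ?thesis unfolding D_def Q_def .
    qed
    moreover have "objective S (Q + t *\<^sub>R D) = objective S Q + t * g - t * t * c"
    proof -
      have a1: "trace ((Q + t *\<^sub>R D) ** P ** (Q + t *\<^sub>R D)) = trace (Q ** P ** Q) + t * trace (Q ** P ** D) + t * trace (D ** P ** Q) + t * t * c"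
        by (simp only: expand_sq trace_add trace_scaleR c_def)
      have a2: "trace (Q + t *\<^sub>R D) = trace Q + t * trace D" by (simp only: trace_add trace_scaleR)
      have a3: "trace (Q ** P ** D) = trace (D ** P ** Q)" using tr_swap[OF sO sD inv(3)] .
      have a4: "t * g = t * trace D - 2 * (t * trace (D ** P ** Q))" unfolding g_def by (simp add: right_diff_distrib)
      show ?thesis unfolding objective_def P_def[symmetric] trace_sub a1 a2 a3 using a4 by linarith
    qed
    ultimately have "t * g \<le> t * (t * c)" by (simp add: mult.assoc)
    then show ?thesis using t by (simp add: mult_le_cancel_left_pos)
  qed
  have g0: "g \<le> 0"
  proof (rule ccontr)
    assume "\<not> g \<le> 0"
    then have gp: "g > 0" by simp
    show False
    proof (cases "c \<le> 0")
      case True then show False using gt[of 1] gp by simp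
    next
      case False
      define t where "t = min 1 (g / (2*c))"
      have "0 < t" "t \<le> 1" using False gp by (auto simp: t_def)
      then have "g \<le> t * c" using gt by blast
      moreover have "t * c \<le> g / 2"
      proof -
        have "t \<le> g / (2*c)" by (simp add: t_def)
        then have "t * c \<le> g / (2*c) * c" using False by (intro mult_right_mono) auto
        also have "g / (2*c) * c = g / 2" using False by (simp add: field_simps)
        finally show ?thesis .
      qed
      ultimately show False using gp by simp
    qed
  qed
  have fSh: "0 \<le> trace (Sh - Sh ** P ** Sh)"
    using obj_nonneg[OF d(1) sSh sSt _ _ inv(3) inv(2)] d by (auto simp: psd_def)
  have swap: "trace (Q ** P ** Sh) = trace (Sh ** P ** Q)" using tr_swap[OF sO sSh inv(3)] by simp
  have tD: "transpose (Sh - Sh_opt) = Sh - Q" using sD unfolding D_def Q_def .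
  have b1: "trace ((Sh - Q) ** P ** (Sh - Q)) = trace (Sh ** P ** Sh) - trace (Sh ** P ** Q) - trace (Q ** P ** Sh) + trace (Q ** P ** Q)"
    by (simp only: expand_sq2 trace_add trace_sub)
  have b2: "g = trace Sh - trace Q - 2 * (trace (Sh ** P ** Q) - trace (Q ** P ** Q))"
    unfolding g_def D_def by (simp only: msub_r trace_sub)
  have b3: "trace (Sh_opt - Sh_opt ** matrix_inv S ** Sh_opt) = trace Q - trace (Q ** P ** Q)"
    unfolding Q_def P_def by (simp only: trace_sub)
  have b4: "0 \<le> trace Sh - trace (Sh ** P ** Sh)" using fSh by (simp only: trace_sub)
  show "trace ((Sh - Sh_opt) ** matrix_inv S ** transpose (Sh - Sh_opt))
             \<le> trace (Sh_opt - Sh_opt ** matrix_inv S ** Sh_opt)"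
    unfolding tD b3 unfolding Q_def[symmetric] P_def[symmetric] b1 swap using b2 b4 g0 by (smt (verit))
qed
end
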